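(* Let $d\ge 2$ and let $a=(a_1,\dots,a_d)\in\mathcal{UN}_d$. Then there exists a special symmetric Toeplitz matrix $T_{\alpha,\beta}$ (of size $d\times d$) which is a matrix associated to the sequence $a$. The constant $\alpha$ is uniquely determined. For $d=2$ there are two choices for $\beta$, namely $\beta$ or $-\beta$. If $d\ge3$, then $\beta$ is uniquely determined.
   Context: A polynomial in $\mathbb{R}[z]$ is hyperbolic if all its roots are real. A sequence $a\in\mathbb{R}^d$ is a Nuij sequence if for every hyperbolic $p\in\mathbb{R}[z]$ of degree $d$, $p_a(z,s):=p(z)+\sum_{k=1}^d a_k s^k p^{(k)}(z)$ is hyperbolic for all $s\in\mathbb{R}$. A Nuij sequence $a$ admits a universal determinantal representation if there exists a real symmetric $d\times d$ matrix $A_a$ such that for every monic hyperbolic polynomial $p(z)=(z+\lambda_1)\cdots(z+\lambda_d)$ of degree $d$ one has $p_a(z,s)=\det(zI+D+sA_a)$, where $D$ is the diagonal matrix with diagonal entries $\lambda_1,\dots,\lambda_d$ written in an arbitrary order (so $\det(zI+D)=p(z)$); such $A_a$ is called a matrix associated to $a$. $\mathcal{UN}_d$ is the set of Nuij sequences in $\mathbb{R}^d$ admitting a universal determinantal representation. For $\alpha,\beta\in\mathbb{R}$, the special symmetric Toeplitz matrix $T_{\alpha,\beta}$ is the matrix with all diagonal entries equal to $\alpha$ and all off-diagonal entries equal to $\beta$. *)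

theory Defs
  imports "HOL-Analysis.Analysis" "HOL-Computational_Algebra.Polynomial"
begin

definition hyperbolic :: "real poly \<Rightarrow> bool" where
  "hyperbolic p \<longleftrightarrow> (\<forall>z::complex. poly (map_poly complex_of_real p) z = 0 \<longrightarrow> z \<in> \<real>)"

definition nuij_poly :: "nat \<Rightarrow> (nat \<Rightarrow> real) \<Rightarrow> real poly \<Rightarrow> real \<Rightarrow> real poly" where
  "nuij_poly d a p s = p + (\<Sum>k=1..d. smult (a k * s ^ k) ((pderiv ^^ k) p))"

definition nuij_seq :: "nat \<Rightarrow> (nat \<Rightarrow> real) \<Rightarrow> bool" where
  "nuij_seq d a \<longleftrightarrow>
     (\<forall>p. hyperbolic p \<and> degree p = d \<longrightarrow> (\<forall>s. hyperbolic (nuij_poly d a p s)))"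

definition diag_mat :: "('n::finite \<Rightarrow> real) \<Rightarrow> real^'n^'n" where
  "diag_mat l = (\<chi> i j. if i = j then l i else 0)"

text \<open>A is a matrix associated to a (d = CARD('n)): real symmetric and
  p_a(z,s) = det(zI + D + sA) for every monic hyperbolic p = prod (z + lambda_i),
  with D = diag(lambda) in any order (all orderings covered by quantifying over all lambda).\<close>
definition associated_matrix :: "(nat \<Rightarrow> real) \<Rightarrow> real^'n^'n \<Rightarrow> bool" where
  "associated_matrix a A \<longleftrightarrow> transpose A = A \<and>
     (\<forall>(l::'n \<Rightarrow> real) z s.
        poly (nuij_poly CARD('n) a (\<Prod>i\<in>UNIV. [:l i, 1:]) s) z
          = det (mat z + diag_mat l + s *\<^sub>R A))"

definition in_UN :: "'n::finite itself \<Rightarrow> (nat \<Rightarrow> real) \<Rightarrow> bool" where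
  "in_UN _ a \<longleftrightarrow> nuij_seq CARD('n) a \<and> (\<exists>A::real^'n^'n. associated_matrix a A)"

definition toeplitz_special :: "real \<Rightarrow> real \<Rightarrow> real^'n^'n" where
  "toeplitz_special \<alpha> \<beta> = (\<chi> i j. if i = j then \<alpha> else \<beta>)"

end

theory Submission imports Defs "HOL-Combinatorics.Permutations" begin


definition Mr :: "real^'n^'n \<Rightarrow> 'n::finite set \<Rightarrow> ('n\<Rightarrow>real) \<Rightarrow> real^'n^'n" where
 "Mr A R l = (\<chi> i j. if i \<in> R then (if i = j then 1 else 0) else (if i = j then l i else 0) + A$i$j)"

lemma Mr_step:
  assumes "i \<notin> R"
  shows "det (Mr A (insert i R) l) = det (Mr A R (l(i:=1))) - det (Mr A R (l(i:=0)))"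
proof -
  define c where "c = (\<lambda>j. row j (Mr A R l))"
  define e where "e = (\<chi> j. if j = i then 1 else (0::real))"
  define a0 where "a0 = (\<chi> j. A$i$j)"
  have 1: "Mr A R (l(i:=1)) = (\<chi> j. if j = i then e + a0 else c j)"
    using assms by (auto simp: Mr_def vec_eq_iff c_def e_def a0_def row_def)
  have 2: "Mr A R (l(i:=0)) = (\<chi> j. if j = i then a0 else c j)"
    using assms by (auto simp: Mr_def vec_eq_iff c_def e_def a0_def row_def)
  have 3: "Mr A (insert i R) l = (\<chi> j. if j = i then e else c j)"
    using assms by (auto simp: Mr_def vec_eq_iff c_def e_def a0_def row_def)
  show ?thesis unfolding 1 2 3 det_row_add by simp
qed

lemma Mr_transfer:
  assumes "\<And>l. det (Mr A {} l) = det (Mr B {} l)"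
  shows "det (Mr A R l) = det (Mr B R l)"
proof -
  have "finite R" by simp
  then show ?thesis
  proof (induction R arbitrary: l rule: finite_induct)
    case empty then show ?case using assms by simp
  next
    case (insert i R) then show ?case by (simp only: Mr_step[OF insert.hyps(2)] insert.IH)
  qed
qed

lemma det_restricted:
  fixes M :: "real^'n::finite^'n"
  assumes "\<And>i j. i \<notin> T \<Longrightarrow> M$i$j = (if i = j then 1 else 0)"
  shows "det M = (\<Sum>p\<in>{p. p permutes T}. of_int (sign p) * (\<Prod>i\<in>T. M$i$(p i)))"
proof -
  have sub: "{p. p permutes T} \<subseteq> {p. p permutes (UNIV::'n set)}"
    by (auto intro: permutes_subset)
  have z: "\<forall>p\<in>{p. p permutes (UNIV::'n set)} - {p. p permutes T}. of_int (sign p) * (\<Prod>i\<in>UNIV. M$i$(p i)) = (0::real)"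
    proof
      fix p assume p: "p \<in> {p. p permutes (UNIV::'n set)} - {p. p permutes T}"
      then have pu: "p permutes (UNIV::'n set)" and pt: "\<not> p permutes T" by auto
      have "\<exists>k. k \<notin> T \<and> p k \<noteq> k"
      proof (rule ccontr)
        assume "\<not> ?thesis"
        then have "\<forall>k. k \<notin> T \<longrightarrow> p k = k" by blast
        with pu have "p permutes T" unfolding permutes_def by blast
        with pt show False by blast
      qed
      then obtain k where k: "k \<notin> T" "p k \<noteq> k" by blast
      have "M$k$(p k) = 0" using assms[OF k(1)] k(2) by auto
      then have "(\<Prod>i\<in>UNIV. M$i$(p i)) = 0"
        by (meson UNIV_I finite prod_zero)
      then show "of_int (sign p) * (\<Prod>i\<in>UNIV. M$i$(p i)) = 0" by simp
    qed
  have "det M = (\<Sum>p\<in>{p. p permutes (UNIV::'n set)}. of_int (sign p) * (\<Prod>i\<in>UNIV. M$i$(p i)))"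
    by (simp add: det_def)
  also have "\<dots> = (\<Sum>p\<in>{p. p permutes T}. of_int (sign p) * (\<Prod>i\<in>UNIV. M$i$(p i)))"
    by (rule sum.mono_neutral_right[OF finite_permutations[OF finite] sub z])
  also have "\<dots> = (\<Sum>p\<in>{p. p permutes T}. of_int (sign p) * (\<Prod>i\<in>T. M$i$(p i)))"
  proof (rule sum.cong[OF refl])
    fix p assume "p \<in> {p. p permutes T}"
    then have pt: "p permutes T" by simp
    have "(\<Prod>i\<in>UNIV. M$i$(p i)) = (\<Prod>i\<in>T. M$i$(p i)) * (\<Prod>i\<in>UNIV-T. M$i$(p i))"
      by (metis Diff_partition finite prod.union_disjoint Diff_disjoint subset_UNIV finite_Diff)
    also have "(\<Prod>i\<in>UNIV-T. M$i$(p i)) = 1"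
      by (rule prod.neutral) (use pt assms in \<open>auto simp: permutes_not_in\<close>)
    finally show "of_int (sign p) * (\<Prod>i\<in>UNIV. M$i$(p i)) = of_int (sign p) * (\<Prod>i\<in>T. M$i$(p i))" by simp
  qed
  finally show ?thesis .
qed



lemma perm_sum_1:
  "(\<Sum>p\<in>{p. p permutes {i}}. of_int (sign p) * (\<Prod>x\<in>{i}. f x (p x))) = (f i i :: real)"
  using sum_over_permutations_insert[of "{}" i "\<lambda>p. of_int (sign p) * (\<Prod>x\<in>{i}. f x (p x))"]
  by simp

lemma perm_sum_2:
  assumes "i \<noteq> j"
  shows "(\<Sum>p\<in>{p. p permutes {i,j}}. of_int (sign p) * (\<Prod>x\<in>{i,j}. f x (p x))) = (f i i * f j j - f i j * f j i :: real)"
proof -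
  have e: "\<And>g. sum g {p. p permutes {j}} = g id"
    using sum_over_permutations_insert[of "{}" j] by simp
  show ?thesis
    using assms
    by (simp add: sum_over_permutations_insert e sign_compose permutation_swap_id sign_swap_id
        Transposition.transpose_def algebra_simps)
qed

lemma perm_sum_3:
  assumes "i \<noteq> j" "i \<noteq> k" "j \<noteq> k"
  shows "(\<Sum>p\<in>{p. p permutes {i,j,k}}. of_int (sign p) * (\<Prod>x\<in>{i,j,k}. f x (p x))) =
     (f i i * f j j * f k k - f i i * f j k * f k j - f i j * f j i * f k k
      + f i j * f j k * f k i + f i k * f j i * f k j - f i k * f j j * f k i :: real)"
proof -
  have e: "\<And>g. sum g {p. p permutes {k}} = g id"
    using sum_over_permutations_insert[of "{}" k] by simp
  have sc: "\<And>a b q. q permutes {j,k} \<Longrightarrow> sign (Transposition.transpose a b \<circ> q) = sign (Transposition.transpose a b) * sign q"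
    by (metis finite.emptyI finite_insert permutes_imp_permutation permutation_swap_id sign_compose)
  show ?thesis
    using assms
    by (simp add: sum_over_permutations_insert e sign_compose permutation_swap_id sign_swap_id
        Transposition.transpose_def algebra_simps sc)
qed



definition mm :: "real^'n^'n \<Rightarrow> 'n::finite set \<Rightarrow> real" where
  "mm A T = det (Mr A (UNIV - T) (\<lambda>_. 0))"

lemma mm_formula: "mm A T = (\<Sum>p\<in>{p. p permutes T}. of_int (sign p) * (\<Prod>x\<in>T. A$x$(p x)))"
proof -
  have "mm A T = (\<Sum>p\<in>{p. p permutes T}. of_int (sign p) * (\<Prod>x\<in>T. (Mr A (UNIV - T) (\<lambda>_. 0))$x$(p x)))"
    unfolding mm_def by (rule det_restricted) (simp add: Mr_def)
  also have "\<dots> = (\<Sum>p\<in>{p. p permutes T}. of_int (sign p) * (\<Prod>x\<in>T. A$x$(p x)))"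
    by (intro sum.cong refl arg_cong2[where f="(*)"] prod.cong) (auto simp: Mr_def)
  finally show ?thesis .
qed

lemma mm1: "mm A {i} = A$i$i"
  unfolding mm_formula by (rule perm_sum_1[where f="\<lambda>x y. A$x$y"])

lemma mm2: "i \<noteq> j \<Longrightarrow> mm A {i,j} = A$i$i * A$j$j - A$i$j * A$j$i"
  unfolding mm_formula by (rule perm_sum_2[where f="\<lambda>x y. A$x$y"])

lemma mm3: "i \<noteq> j \<Longrightarrow> i \<noteq> k \<Longrightarrow> j \<noteq> k \<Longrightarrow> mm A {i,j,k} =
     A$i$i * A$j$j * A$k$k - A$i$i * A$j$k * A$k$j - A$i$j * A$j$i * A$k$k
      + A$i$j * A$j$k * A$k$i + A$i$k * A$j$i * A$k$j - A$i$k * A$j$j * A$k$i"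
  unfolding mm_formula by (rule perm_sum_3[where f="\<lambda>x y. A$x$y"])

lemma assoc_slice:
  fixes A :: "real^'n::finite^'n"
  assumes "associated_matrix a A"
  shows "det (Mr A {} l) = poly (nuij_poly CARD('n) a (\<Prod>i\<in>UNIV. [:l i, 1:]) 1) 0"
proof -
  have "Mr A {} l = mat 0 + diag_mat l + 1 *\<^sub>R A"
    by (simp add: Mr_def vec_eq_iff mat_def diag_mat_def)
  then show ?thesis using assms unfolding associated_matrix_def by metis
qed

lemma assoc_mm:
  assumes "associated_matrix a A" "associated_matrix a B"
  shows "mm (A::real^'n::finite^'n) T = mm B T"
  unfolding mm_def by (rule Mr_transfer) (simp add: assoc_slice[OF assms(1)] assoc_slice[OF assms(2)])

lemma det_perm_conj:
  fixes K :: "real^'n::finite^'n"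
  assumes p: "p permutes (UNIV::'n set)"
  shows "det (\<chi> i j. K$(p i)$(p j)) = det K"
proof -
  let ?K' = "(\<chi> i. K$(p i)) :: real^'n^'n"
  have "(\<chi> i j. K$(p i)$(p j)) = (\<chi> i j. ?K'$i$(p j))" by simp
  then have "det (\<chi> i j. K$(p i)$(p j)) = of_int (sign p) * det ?K'"
    using det_permute_columns[OF p, of ?K'] by simp
  also have "\<dots> = of_int (sign p) * (of_int (sign p) * det K)"
    using det_permute_rows[OF p, of K] by simp
  also have "\<dots> = det K"
    by (simp add: mult.assoc[symmetric] flip: of_int_mult)
  finally show ?thesis .
qed

definition Atau :: "real^'n^'n \<Rightarrow> 'n::finite \<Rightarrow> 'n \<Rightarrow> real^'n^'n" where
  "Atau A a b = (\<chi> i j. A$(Transposition.transpose a b i)$(Transposition.transpose a b j))"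

lemma Atau_slice:
  fixes A :: "real^'n::finite^'n"
  assumes "associated_matrix a' A"
  shows "det (Mr (Atau A a b) {} l) = det (Mr A {} l)"
proof -
  let ?t = "Transposition.transpose a b"
  have tp: "?t permutes (UNIV::'n set)" by (simp add: permutes_swap_id)
  have "Mr (Atau A a b) {} l = (\<chi> i j. (Mr A {} (l \<circ> ?t))$(?t i)$(?t j))"
    by (auto simp: Mr_def Atau_def vec_eq_iff transpose_eq_iff)
  then have "det (Mr (Atau A a b) {} l) = det (Mr A {} (l \<circ> ?t))"
    using det_perm_conj[OF tp] by simp
  also have "\<dots> = det (Mr A {} l)"
  proof -
    have "(\<Prod>i\<in>UNIV. [:(l \<circ> ?t) i, 1:]) = (\<Prod>i\<in>UNIV. [:l i, 1:])"
      using prod.permute[OF tp, of "\<lambda>i. [:l i, 1:]"] by (simp add: comp_def)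
    then show ?thesis using assoc_slice[OF assms] by metis
  qed
  finally show ?thesis .
qed

lemma Atau_mm:
  fixes A :: "real^'n::finite^'n"
  assumes "associated_matrix a' A"
  shows "mm A T = mm (Atau A a b) T"
  unfolding mm_def by (rule Mr_transfer) (simp add: Atau_slice[OF assms])

lemma sign_conj:
  fixes A :: "real^'n::finite^'n"
  assumes "associated_matrix a A" "\<And>i. t i * t i = 1"
  shows "associated_matrix a (\<chi> i j. t i * t j * A$i$j)"
proof -
  let ?B = "(\<chi> i j. t i * t j * A$i$j) :: real^'n^'n"
  have sym: "transpose A = A" using assms(1) unfolding associated_matrix_def by simp
  then have "\<And>i j. A$j$i = A$i$j" by (metis transpose_def vec_lambda_beta)
  then have symB: "transpose ?B = ?B" by (simp add: transpose_def vec_eq_iff mult.commute)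
  let ?S = "diag_mat t :: real^'n^'n"
  have dS: "det ?S * det ?S = 1"
  proof -
    have "det ?S = (\<Prod>i\<in>UNIV. t i)"
      by (subst det_diagonal) (auto simp: diag_mat_def)
    then have "det ?S * det ?S = (\<Prod>i\<in>UNIV. t i * t i)" by (simp add: prod.distrib)
    also have "\<dots> = 1" using assms(2) by simp
    finally show ?thesis .
  qed
  have key: "\<And>X::real^'n^'n. ?S ** X ** ?S = (\<chi> i j. t i * t j * X$i$j)"
  proof -
    fix X :: "real^'n^'n"
    have r1: "\<And>Y::real^'n^'n. \<And>i j. (?S ** Y)$i$j = t i * Y$i$j"
    proof -
      fix Y :: "real^'n^'n" and i j
      have "(?S ** Y)$i$j = (\<Sum>k\<in>UNIV. (if k = i then t i * Y$i$j else 0))"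
        unfolding matrix_matrix_mult_def diag_mat_def by (simp only: vec_lambda_beta, rule sum.cong) auto
      then show "(?S ** Y)$i$j = t i * Y$i$j" by simp
    qed
    have r2: "\<And>Y::real^'n^'n. \<And>i j. (Y ** ?S)$i$j = Y$i$j * t j"
    proof -
      fix Y :: "real^'n^'n" and i j
      have "(Y ** ?S)$i$j = (\<Sum>k\<in>UNIV. (if k = j then Y$i$j * t j else 0))"
        unfolding matrix_matrix_mult_def diag_mat_def by (simp only: vec_lambda_beta, rule sum.cong) auto
      then show "(Y ** ?S)$i$j = Y$i$j * t j" by simp
    qed
    show "?S ** X ** ?S = (\<chi> i j. t i * t j * X$i$j)"
      by (simp add: vec_eq_iff r1 r2 algebra_simps)
  qed
  have "\<And>l z s. det (mat z + diag_mat l + s *\<^sub>R ?B) = det (mat z + diag_mat l + s *\<^sub>R A)"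
  proof -
    fix l z s
    have "mat z + diag_mat l + s *\<^sub>R ?B = ?S ** (mat z + diag_mat l + s *\<^sub>R A) ** ?S"
      unfolding key using assms(2)
      by (auto simp: vec_eq_iff mat_def diag_mat_def algebra_simps)
    then have "det (mat z + diag_mat l + s *\<^sub>R ?B) = det ?S * det (mat z + diag_mat l + s *\<^sub>R A) * det ?S"
      by (simp add: det_mul)
    also have "\<dots> = det (mat z + diag_mat l + s *\<^sub>R A)" using dS by (simp add: algebra_simps)
    finally show "det (mat z + diag_mat l + s *\<^sub>R ?B) = det (mat z + diag_mat l + s *\<^sub>R A)" .
  qed
  then show ?thesis using assms(1) symB unfolding associated_matrix_def by simp
qed



lemma cube_inj: "(b::real)^3 = b'^3 \<Longrightarrow> b = b'"
proof -
  assume h: "b^3 = b'^3"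
  have id: "(b-b')*((b+b'/2)^2 + 3/4*b'^2) = b^3 - b'^3"
    by (simp add: power2_eq_square power3_eq_cube field_simps)
  have z: "(b-b')*((b+b'/2)^2 + 3/4*b'^2) = 0" using h id by simp
  show "b = b'"
  proof (rule ccontr)
    assume ne: "b \<noteq> b'"
    then have s: "(b+b'/2)^2 + 3/4*b'^2 = 0" using z by simp
    have n1: "(b+b'/2)^2 \<ge> 0" "b'^2 \<ge> 0" by simp_all
    then have "b'^2 = 0" "(b+b'/2)^2 = 0" using s by linarith+
    then show False using ne by simp
  qed
qed

lemma toe_entries: "(toeplitz_special \<alpha> \<beta> :: real^'n::finite^'n)$i$j = (if i = j then \<alpha> else \<beta>)"
  by (simp add: toeplitz_special_def)

lemma uniq:
  fixes T1 T2 :: "real^'n::finite^'n"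
  assumes "T1 = toeplitz_special \<alpha> \<beta>" "T2 = toeplitz_special \<alpha>' \<beta>'"
    and "associated_matrix a T1" "associated_matrix a T2"
    and ij: "(i::'n) \<noteq> j"
  shows "\<alpha> = \<alpha>' \<and> \<beta>^2 = \<beta>'^2 \<and> (\<forall>k. k \<noteq> i \<and> k \<noteq> j \<longrightarrow> \<beta> = \<beta>')"
proof -
  have e: "\<And>T. mm T1 T = mm T2 T" using assoc_mm[OF assms(3,4)] by blast
  have a: "\<alpha> = \<alpha>'" using e[of "{i}"] by (simp add: mm1 assms toe_entries)
  have b: "\<beta>^2 = \<beta>'^2" using e[of "{i,j}"] ij a by (simp add: mm2 assms toe_entries power2_eq_square)
  have c: "\<beta> = \<beta>'" if k: "k \<noteq> i" "k \<noteq> j" for k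
  proof -
    have E: "\<alpha>^3 - 3*\<alpha>*\<beta>^2 + 2*\<beta>^3 = \<alpha>'^3 - 3*\<alpha>'*\<beta>'^2 + 2*\<beta>'^3"
      using e[of "{i,j,k}"] ij k by (simp add: mm3 assms toe_entries power2_eq_square power3_eq_cube algebra_simps)
    have "\<beta>^3 = \<beta>'^3" using E a b by simp
    then show ?thesis by (rule cube_inj)
  qed
  show ?thesis using a b c by blast
qed



lemma exist:
  fixes A :: "real^'n::finite^'n"
  fixes i0 j0 :: 'n
  assumes assoc: "associated_matrix a A" and i0j0: "i0 \<noteq> j0"
  shows "\<exists>\<alpha> \<beta>. associated_matrix a (toeplitz_special \<alpha> \<beta> :: real^'n^'n)"
proof -
  have "transpose A = A" using assoc unfolding associated_matrix_def by simp
  then have sy: "\<And>i j. A$j$i = A$i$j" by (metis transpose_def vec_lambda_beta)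
  have inv: "\<And>T x y. mm A T = mm (Atau A x y) T" by (rule Atau_mm[OF assoc])
  have tinj: "\<And>u v x y. x \<noteq> y \<Longrightarrow> Transposition.transpose u v x \<noteq> Transposition.transpose u v y"
    using transpose_eq_imp_eq by metis
  define \<alpha> where "\<alpha> = A$i0$i0"
  define b where "b = A$i0$j0"
  have D: "\<And>i. A$i$i = \<alpha>"
  proof -
    fix i show "A$i$i = \<alpha>" using inv[of "{i0}" i0 i] by (simp add: mm1 Atau_def \<alpha>_def)
  qed
  have Q2: "\<And>x y u v. x \<noteq> y \<Longrightarrow> (A$x$y)^2 = (A$(Transposition.transpose u v x)$(Transposition.transpose u v y))^2"
  proof -
    fix x y u v assume xy: "(x::'n) \<noteq> y"
    show "(A$x$y)^2 = (A$(Transposition.transpose u v x)$(Transposition.transpose u v y))^2"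
      using inv[of "{x,y}" u v] xy tinj[OF xy, of u v]
      by (simp add: mm2 Atau_def D sy power2_eq_square)
  qed
  have Q: "\<And>i j. i \<noteq> j \<Longrightarrow> (A$i$j)^2 = b^2"
  proof -
    fix i j assume ij: "(i::'n) \<noteq> j"
    define j1 where "j1 = Transposition.transpose i0 i j0"
    have "b^2 = (A$i$j1)^2" using Q2[OF i0j0, of i0 i] unfolding b_def j1_def by simp
    have j1i: "j1 \<noteq> i" unfolding j1_def using tinj[OF i0j0[symmetric], of i0 i] by simp
    have "(A$i$j1)^2 = (A$i$j)^2" using Q2[OF j1i[symmetric], of j1 j] ij j1i by simp
    then show "(A$i$j)^2 = b^2" using \<open>b^2 = (A$i$j1)^2\<close> by simp
  qed
  show ?thesis
  proof (cases "b = 0")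
    case True
    have "A = toeplitz_special \<alpha> 0"
      using Q True by (auto simp: vec_eq_iff toe_entries D)
    then show ?thesis using assoc by blast
  next
    case bnz: False
    show ?thesis
    proof (cases "\<exists>k0. k0 \<noteq> i0 \<and> k0 \<noteq> j0")
      case False
      have "A = toeplitz_special \<alpha> b"
      proof -
        have "A$i$j = b" if "i \<noteq> j" for i j
          using False that sy unfolding b_def by metis
        then show ?thesis by (auto simp: vec_eq_iff toe_entries D)
      qed
      then show ?thesis using assoc by blast
    next
      case True
      then obtain k0 where k0: "k0 \<noteq> i0" "k0 \<noteq> j0" by blast
      define c where "c = A$i0$j0 * A$j0$k0 * A$k0$i0"
      have P3: "\<And>x y z u v. x \<noteq> y \<Longrightarrow> x \<noteq> z \<Longrightarrow> y \<noteq> z \<Longrightarrow>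
          A$x$y * A$y$z * A$z$x = A$(Transposition.transpose u v x)$(Transposition.transpose u v y)
             * A$(Transposition.transpose u v y)$(Transposition.transpose u v z)
             * A$(Transposition.transpose u v z)$(Transposition.transpose u v x)"
      proof -
        fix x y z u v :: 'n assume d: "(x::'n) \<noteq> y" "x \<noteq> z" "y \<noteq> z"
        let ?t = "Transposition.transpose u v"
        have d': "?t x \<noteq> ?t y" "?t x \<noteq> ?t z" "?t y \<noteq> ?t z" using tinj[OF d(1)] tinj[OF d(2)] tinj[OF d(3)] by auto
        have s1: "A$x$y * A$y$x = b^2" "A$x$z * A$z$x = b^2" "A$y$z * A$z$y = b^2"
          using Q d sy by (auto simp: power2_eq_square)
        have s2: "A$(?t x)$(?t y) * A$(?t y)$(?t x) = b^2" "A$(?t x)$(?t z) * A$(?t z)$(?t x) = b^2"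
                 "A$(?t y)$(?t z) * A$(?t z)$(?t y) = b^2"
          using Q d' sy by (auto simp: power2_eq_square)
        have e: "mm A {x,y,z} = mm (Atau A u v) {x,y,z}" by (rule inv)
        have L: "mm A {x,y,z} = \<alpha>^3 - 3*\<alpha>*b^2 + 2*(A$x$y * A$y$z * A$z$x)"
        proof -
          have "mm A {x,y,z} = \<alpha>*\<alpha>*\<alpha> - \<alpha>*(A$y$z * A$z$y) - (A$x$y * A$y$x)*\<alpha>
                 + A$x$y * A$y$z * A$z$x + A$x$z * A$y$x * A$z$y - A$x$z * \<alpha> * A$z$x"
            using d by (simp add: mm3 D)
          also have "A$x$z * A$y$x * A$z$y = A$x$y * A$y$z * A$z$x" using sy by (simp add: algebra_simps)
          finally show ?thesis using s1 by (simp add: power3_eq_cube algebra_simps)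
        qed
        have R: "mm (Atau A u v) {x,y,z} = \<alpha>^3 - 3*\<alpha>*b^2 + 2*(A$(?t x)$(?t y) * A$(?t y)$(?t z) * A$(?t z)$(?t x))"
        proof -
          have "mm (Atau A u v) {x,y,z} = \<alpha>*\<alpha>*\<alpha> - \<alpha>*(A$(?t y)$(?t z) * A$(?t z)$(?t y)) - (A$(?t x)$(?t y) * A$(?t y)$(?t x))*\<alpha>
                 + A$(?t x)$(?t y) * A$(?t y)$(?t z) * A$(?t z)$(?t x) + A$(?t x)$(?t z) * A$(?t y)$(?t x) * A$(?t z)$(?t y) - A$(?t x)$(?t z) * \<alpha> * A$(?t z)$(?t x)"
            using d by (simp add: mm3 D Atau_def)
          also have "A$(?t x)$(?t z) * A$(?t y)$(?t x) * A$(?t z)$(?t y) = A$(?t x)$(?t y) * A$(?t y)$(?t z) * A$(?t z)$(?t x)"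
            using sy by (simp add: algebra_simps)
          finally show ?thesis using s2 by (simp add: power3_eq_cube algebra_simps)
        qed
        show "A$x$y * A$y$z * A$z$x = A$(?t x)$(?t y) * A$(?t y)$(?t z) * A$(?t z)$(?t x)"
          using e L R by simp
      qed
      have Tri: "\<And>i j. i \<noteq> i0 \<Longrightarrow> j \<noteq> i0 \<Longrightarrow> i \<noteq> j \<Longrightarrow> A$i0$i * A$i$j * A$j$i0 = c"
      proof -
        fix i j assume ij: "i \<noteq> i0" "j \<noteq> i0" "i \<noteq> j"
        define k1 where "k1 = Transposition.transpose j0 i k0"
        have k1: "k1 \<noteq> i0" "k1 \<noteq> i"
          unfolding k1_def using k0 ij i0j0 by (auto simp: transpose_eq_iff)
        have "c = A$i0$i * A$i$k1 * A$k1$i0"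
          using P3[of i0 j0 k0 j0 i] i0j0 k0 ij unfolding c_def k1_def by (simp add: transpose_eq_iff)
        also have "\<dots> = A$i0$i * A$i$j * A$j$i0"
          using P3[of i0 i k1 k1 j] ij k1 by (simp add: transpose_eq_iff)
        finally show "A$i0$i * A$i$j * A$j$i0 = c" by simp
      qed
      have c2: "c^2 = b^6"
      proof -
        have "c^2 = (A$i0$j0)^2 * (A$j0$k0)^2 * (A$k0$i0)^2" unfolding c_def by (simp add: power_mult_distrib)
        also have "\<dots> = b^2*b^2*b^2" using Q i0j0 k0 by simp
        also have "\<dots> = b^6" by algebra
        finally show ?thesis .
      qed
      have cnz: "c \<noteq> 0" using c2 bnz by auto
      define t where "t = (\<lambda>i. if i = i0 then b^3/c else A$i0$i/b)"
      define \<beta> where "\<beta> = c/b^2"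
      have tt: "\<And>i. t i * t i = 1"
      proof -
        fix i show "t i * t i = 1"
        proof (cases "i = i0")
          case True
          then have "t i * t i = (b^3*b^3)/(c*c)" unfolding t_def by simp
          also have "b^3*b^3 = c*c" using c2 by algebra
          finally show ?thesis using cnz by simp
        next
          case False
          then have "t i * t i = (A$i0$i)^2 / b^2" unfolding t_def by (simp add: power2_eq_square)
          then show ?thesis using Q[of i0 i] False bnz by simp
        qed
      qed
      have "(\<chi> i j. t i * t j * A$i$j) = (toeplitz_special \<alpha> \<beta> :: real^'n^'n)"
      proof -
        have "t i * t j * A$i$j = (if i = j then \<alpha> else \<beta>)" for i j
        proof (cases "i = j")
          case True then show ?thesis using tt D by simp
        next
          case ij: False
          have k: "b^3/c * (A$i0$x/b) * A$i0$x = \<beta>" if "x \<noteq> i0" for x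
          proof -
            have "b^3/c * (A$i0$x/b) * A$i0$x = b^2 * (A$i0$x)^2 / c"
              using bnz by (simp add: power2_eq_square power3_eq_cube field_simps)
            also have "\<dots> = b^4/c"
            proof -
              have q: "(A$i0$x)^2 = b^2" using Q[of i0 x] that by auto
              have "b^2*b^2 = b^4" by algebra
              then show ?thesis by (simp add: q)
            qed
            also have "\<dots> = c/b^2"
            proof -
              have "b^4 * b^2 = c * c" using c2 by algebra
              then show ?thesis using cnz bnz by (simp add: field_simps)
            qed
            finally show ?thesis unfolding \<beta>_def .
          qed
          show ?thesis
          proof (cases "i = i0")
            case True then show ?thesis using ij k[of j] by (simp add: t_def)
          next
            case i: False
            show ?thesis
            proof (cases "j = i0")
              case True then show ?thesis using ij k[of i] i sy[of i0 i] by (simp add: t_def algebra_simps)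
            next
              case j: False
              have "t i * t j * A$i$j = (A$i0$i * A$i$j * A$j$i0) / b^2"
                using i j sy[of i0 j] by (simp add: t_def power2_eq_square)
              then show ?thesis using Tri[OF i j ij] ij by (simp add: \<beta>_def)
            qed
          qed
        qed
        then show ?thesis by (simp add: vec_eq_iff toe_entries)
      qed
      then have "associated_matrix a (toeplitz_special \<alpha> \<beta> :: real^'n^'n)"
        using sign_conj[of a A t, OF assoc tt] by simp
      then show ?thesis by blast
    qed
  qed
qed



theorem proposition3p2:
  fixes a :: "nat \<Rightarrow> real"
  assumes "CARD('n::finite) \<ge> 2"
    and "in_UN TYPE('n) a"
  shows "(\<exists>\<alpha> \<beta>. associated_matrix a (toeplitz_special \<alpha> \<beta> :: real^'n^'n))
     \<and> (\<forall>\<alpha> \<beta> \<alpha>' \<beta>'. associated_matrix a (toeplitz_special \<alpha> \<beta> :: real^'n^'n)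
           \<and> associated_matrix a (toeplitz_special \<alpha>' \<beta>' :: real^'n^'n) \<longrightarrow> \<alpha>' = \<alpha>)
     \<and> (CARD('n) = 2 \<longrightarrow> (\<forall>\<alpha> \<beta>. associated_matrix a (toeplitz_special \<alpha> \<beta> :: real^'n^'n) \<longrightarrow>
           (\<forall>\<alpha>' \<beta>'. associated_matrix a (toeplitz_special \<alpha>' \<beta>' :: real^'n^'n)
               \<longleftrightarrow> \<alpha>' = \<alpha> \<and> (\<beta>' = \<beta> \<or> \<beta>' = - \<beta>))))
     \<and> (CARD('n) \<ge> 3 \<longrightarrow> (\<forall>\<alpha> \<beta> \<alpha>' \<beta>'. associated_matrix a (toeplitz_special \<alpha> \<beta> :: real^'n^'n)
           \<and> associated_matrix a (toeplitz_special \<alpha>' \<beta>' :: real^'n^'n) \<longrightarrow> \<beta>' = \<beta>))"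
proof -
  obtain A :: "real^'n^'n" where A: "associated_matrix a A"
    using assms(2) unfolding in_UN_def by blast
  obtain i0 :: 'n where True by simp
  have cd: "card (UNIV - {i0}) = CARD('n) - 1" by (simp add: card_Diff_singleton)
  have "UNIV - {i0} \<noteq> {}"
  proof
    assume "UNIV - {i0} = {}"
    then have "card (UNIV - {i0}) = 0" by (metis card.empty)
    with cd assms(1) show False by simp
  qed
  then obtain j0 where j0: "j0 \<noteq> i0" by blast
  have P1: "\<exists>\<alpha> \<beta>. associated_matrix a (toeplitz_special \<alpha> \<beta> :: real^'n^'n)"
    using exist[OF A j0[symmetric]] .
  have P2: "\<forall>\<alpha> \<beta> \<alpha>' \<beta>'. associated_matrix a (toeplitz_special \<alpha> \<beta> :: real^'n^'n)
           \<and> associated_matrix a (toeplitz_special \<alpha>' \<beta>' :: real^'n^'n) \<longrightarrow> \<alpha>' = \<alpha>"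
    using uniq[OF refl refl _ _ j0[symmetric]] by metis
  have P3: "CARD('n) = 2 \<longrightarrow> (\<forall>\<alpha> \<beta>. associated_matrix a (toeplitz_special \<alpha> \<beta> :: real^'n^'n) \<longrightarrow>
           (\<forall>\<alpha>' \<beta>'. associated_matrix a (toeplitz_special \<alpha>' \<beta>' :: real^'n^'n)
               \<longleftrightarrow> \<alpha>' = \<alpha> \<and> (\<beta>' = \<beta> \<or> \<beta>' = - \<beta>)))"
  proof (intro impI allI iffI)
    assume c2: "CARD('n) = 2"
    have U: "{i0, j0} = (UNIV::'n set)"
      by (rule card_subset_eq) (use c2 j0 in auto)
    fix \<alpha> \<beta> \<alpha>' \<beta>'
    assume T: "associated_matrix a (toeplitz_special \<alpha> \<beta> :: real^'n^'n)"
    {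
      assume T': "associated_matrix a (toeplitz_special \<alpha>' \<beta>' :: real^'n^'n)"
      have "\<alpha> = \<alpha>' \<and> \<beta>^2 = \<beta>'^2" using uniq[OF refl refl T T' j0[symmetric]] by blast
      then show "\<alpha>' = \<alpha> \<and> (\<beta>' = \<beta> \<or> \<beta>' = - \<beta>)" by (metis power2_eq_iff)
    }
    {
      assume h: "\<alpha>' = \<alpha> \<and> (\<beta>' = \<beta> \<or> \<beta>' = - \<beta>)"
      show "associated_matrix a (toeplitz_special \<alpha>' \<beta>' :: real^'n^'n)"
      proof (cases "\<beta>' = \<beta>")
        case True then show ?thesis using h T by simp
      next
        case False
        then have b': "\<beta>' = - \<beta>" using h by simp
        define t where "t = (\<lambda>i::'n. if i = i0 then 1 else (-1::real))"
        have tt: "\<And>i. t i * t i = 1" by (simp add: t_def)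
        have "(\<chi> i j. t i * t j * (toeplitz_special \<alpha> \<beta> :: real^'n^'n)$i$j) = (toeplitz_special \<alpha>' \<beta>' :: real^'n^'n)"
        proof -
          have "t i * t j * (if i = j then \<alpha> else \<beta>) = (if i = j then \<alpha>' else \<beta>')" for i j :: 'n
          proof -
            have "i \<in> {i0, j0}" "j \<in> {i0,j0}" using U by auto
            then show ?thesis using h b' j0 by (auto simp: t_def)
          qed
          then show ?thesis by (simp add: vec_eq_iff toe_entries)
        qed
        then show ?thesis using sign_conj[of a "toeplitz_special \<alpha> \<beta> :: real^'n^'n" t, OF T tt] by simp
      qed
    }
  qed
  have P4: "CARD('n) \<ge> 3 \<longrightarrow> (\<forall>\<alpha> \<beta> \<alpha>' \<beta>'. associated_matrix a (toeplitz_special \<alpha> \<beta> :: real^'n^'n)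
           \<and> associated_matrix a (toeplitz_special \<alpha>' \<beta>' :: real^'n^'n) \<longrightarrow> \<beta>' = \<beta>)"
  proof (intro impI allI)
    assume c3: "CARD('n) \<ge> 3"
    have cd3: "card (UNIV - {i0, j0}) = CARD('n) - 2" using j0 by (simp add: card_Diff_subset)
    have "UNIV - {i0, j0} \<noteq> {}"
    proof
      assume "UNIV - {i0, j0} = {}"
      then have "card (UNIV - {i0, j0}) = 0" by (metis card.empty)
      with cd3 c3 show False by simp
    qed
    then obtain k where k: "k \<noteq> i0" "k \<noteq> j0" by blast
    fix \<alpha> \<beta> \<alpha>' \<beta>'
    assume "associated_matrix a (toeplitz_special \<alpha> \<beta> :: real^'n^'n)
           \<and> associated_matrix a (toeplitz_special \<alpha>' \<beta>' :: real^'n^'n)"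
    then show "\<beta>' = \<beta>" using uniq[OF refl refl _ _ j0[symmetric], of a \<alpha> \<beta> \<alpha>' \<beta>'] k by metis
  qed
  show ?thesis using P1 P2 P3 P4 by blast
qed

end
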